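(* Let $(X;Y,Z)$ be a subwing triple (degenerate or non-degenerate) in $\mathcal{C}_n$, and let $W\in\mathcal{W}_X$ be indecomposable. (i) If $Y\neq0$: $Y$ and $W$ are compatible if and only if $W\in\mathcal{W}_Y\cup\mathcal{W}_Z$ or $W\in\mathbf{R}_Y$. (ii) If $Z\neq0$: $Z$ and $W$ are compatible if and only if $W\in\mathcal{W}_Y\cup\mathcal{W}_Z$ or $W\in\mathbf{C}_Z$.
   Context: Let $k$ be algebraically closed, $n\ge2$, $\mathcal{T}_n$ the tube of rank $n$ (finite-dimensional nilpotent representations of the cyclically oriented $\tilde A_{n-1}$-quiver; AR-translation $\tau$), $\mathcal{C}_n=D^b(\mathcal{T}_n)/\tau^{-1}[1]$ the cluster tube (a 2-Calabi–Yau triangulated category), with indecomposables identified with those of $\mathcal{T}_n$. Indecomposables have coordinates $(a,b)$, $a\in\mathbb{Z}/n$, $b\ge1$ the quasilength, with $\tau(a,b)=(a-1,b)$ and irreducible maps $(a,b)\to(a,b+1)$ and $(a,b)\to(a+1,b-1)$. The ray $\mathbf{R}_{(a,i)}$ is $\{(a,i+j):j\ge0\}$; the coray $\mathbf{C}_{(a,i)}$ is $\{(a-j,i+j):j\ge0\}$. For $X=(a,i)$, $i\le n-1$, the wing $\mathcal{W}_X$ is $\{(a+s,i'):s\ge0,i'\ge1,s+i'\le i\}$; $\mathcal{W}_0=\emptyset$. Indecomposables $X,Y$ are compatible if $\operatorname{Ext}^1_{\mathcal{C}_n}(X,Y)=\operatorname{Ext}^1_{\mathcal{C}_n}(Y,X)=0$.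 A non-degenerate subwing triple $(X;Y,Z)$: $X=(a,b)$ with $3\le b\le n-1$, $Y=(a,c)$, $Z=(a+c+1,b-c-1)$ for some $1\le c\le b-2$. A degenerate subwing triple $(X;Y,Z)$: $X=(a,b)$ with $2\le b\le n-1$ and either $Y=(a,b-1)$, $Z=0$, or $Y=0$, $Z=(a+1,b-1)$. *)

theory Defs
  imports Main
begin

text \<open>An indecomposable is a pair (a,b) :: int \<times> nat with 0 \<le> a < n (vertex, read mod n)
  and quasilength b \<ge> 1.  Following the irreducible maps (a,b) -> (a,b+1) (mono) and
  (a,b) -> (a+1,b-1) (epi), (a,b) is the uniserial module with socle S_a and
  composition factors S_a, S_(a+1), ..., S_(a+b-1) (top).  A possibly-zero object
  (Y, Z in a degenerate triple) is an option; None is the zero object.\<close>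

definition ind :: "nat \<Rightarrow> int \<times> nat \<Rightarrow> bool" where
  "ind n X \<longleftrightarrow> 0 \<le> fst X \<and> fst X < int n \<and> 1 \<le> snd X"

definition tau :: "nat \<Rightarrow> int \<times> nat \<Rightarrow> int \<times> nat" where
  "tau n X = ((fst X - 1) mod int n, snd X)"

text \<open>dim Hom_T((c,d),(a,b)): a nonzero map between uniserials is determined (up to scalar,
  modulo shorter ones) by an image of length k, which is the length-k quotient
  (c+d-k, k) of the source and must equal the length-k submodule (a,k) of the target.\<close>
definition homdim :: "nat \<Rightarrow> int \<times> nat \<Rightarrow> int \<times> nat \<Rightarrow> nat" where
  "homdim n M N = card {k::nat. 1 \<le> k \<and> k \<le> min (snd M) (snd N) \<and>
      (fst M + int (snd M) - int k) mod int n = fst N mod int n}"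

text \<open>Auslander-Reiten formula in the hereditary category T_n:
  dim Ext^1_T(X,Y) = dim Hom_T(Y, tau X).\<close>
definition ext1_T :: "nat \<Rightarrow> int \<times> nat \<Rightarrow> int \<times> nat \<Rightarrow> nat" where
  "ext1_T n X Y = homdim n Y (tau n X)"

text \<open>In C_n = D^b(T_n)/tau^{-1}[1]:  Ext^1_C(X,Y) = Ext^1_T(X,Y) \<oplus> D Ext^1_T(Y,X).\<close>
definition ext1_C :: "nat \<Rightarrow> int \<times> nat \<Rightarrow> int \<times> nat \<Rightarrow> nat" where
  "ext1_C n X Y = ext1_T n X Y + ext1_T n Y X"

definition compatible :: "nat \<Rightarrow> int \<times> nat \<Rightarrow> int \<times> nat \<Rightarrow> bool" where
  "compatible n X Y \<longleftrightarrow> ext1_C n X Y = 0 \<and> ext1_C n Y X = 0"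

definition wing :: "nat \<Rightarrow> int \<times> nat \<Rightarrow> (int \<times> nat) set" where
  "wing n X = {((fst X + int s) mod int n, i') | s i'. 1 \<le> i' \<and> s + i' \<le> snd X}"

definition wing_opt :: "nat \<Rightarrow> (int \<times> nat) option \<Rightarrow> (int \<times> nat) set" where
  "wing_opt n Y = (case Y of None \<Rightarrow> {} | Some X \<Rightarrow> wing n X)"

definition ray :: "nat \<Rightarrow> int \<times> nat \<Rightarrow> (int \<times> nat) set" where
  "ray n X = {(fst X, snd X + j) | j. True}"

definition coray :: "nat \<Rightarrow> int \<times> nat \<Rightarrow> (int \<times> nat) set" where
  "coray n X = {((fst X - int j) mod int n, snd X + j) | j. True}"

definition nondeg_subwing_triple ::
  "nat \<Rightarrow> int \<times> nat \<Rightarrow> (int \<times> nat) option \<Rightarrow> (int \<times> nat) option \<Rightarrow> bool" where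
  "nondeg_subwing_triple n X Y Z \<longleftrightarrow>
     (\<exists>a b c. X = (a, b) \<and> 0 \<le> a \<and> a < int n \<and> 3 \<le> b \<and> b \<le> n - 1 \<and>
        1 \<le> c \<and> c \<le> b - 2 \<and> Y = Some (a, c) \<and>
        Z = Some ((a + int c + 1) mod int n, b - c - 1))"

definition deg_subwing_triple ::
  "nat \<Rightarrow> int \<times> nat \<Rightarrow> (int \<times> nat) option \<Rightarrow> (int \<times> nat) option \<Rightarrow> bool" where
  "deg_subwing_triple n X Y Z \<longleftrightarrow>
     (\<exists>a b. X = (a, b) \<and> 0 \<le> a \<and> a < int n \<and> 2 \<le> b \<and> b \<le> n - 1 \<and>
        ((Y = Some (a, b - 1) \<and> Z = None) \<or>
         (Y = None \<and> Z = Some ((a + 1) mod int n, b - 1))))"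

definition subwing_triple ::
  "nat \<Rightarrow> int \<times> nat \<Rightarrow> (int \<times> nat) option \<Rightarrow> (int \<times> nat) option \<Rightarrow> bool" where
  "subwing_triple n X Y Z \<longleftrightarrow> nondeg_subwing_triple n X Y Z \<or> deg_subwing_triple n X Y Z"

end

theory Submission
  imports Defs
begin

lemma modeq:
  fixes p q n :: int
  assumes "0 < n" "\<bar>p - q\<bar> < n"
  shows "(p mod n = q mod n) = (p = q)"
proof
  assume "p mod n = q mod n"
  then have "n dvd p - q" by (simp add: mod_eq_dvd_iff)
  then show "p = q" using assms dvd_imp_le_int[of "p - q" n] by force
qed simp

lemma hd_iff:
  assumes n: "0 < n" and that: "p' mod int n = p mod int n" and q: "q' mod int n = q mod int n"
    and b: "\<And>k. 1 \<le> k \<Longrightarrow> k \<le> min l m \<Longrightarrow> \<bar>p + (int l - int k) - q\<bar> < int n"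
  shows "homdim n (p', l) (q', m) = 0 \<longleftrightarrow>
          (\<forall>k. 1 \<le> k \<and> k \<le> min l m \<longrightarrow> p + (int l - int k) \<noteq> q)"
proof -
  have fin: "finite {k::nat. 1 \<le> k \<and> k \<le> min l m \<and>
      (p' + int l - int k) mod int n = q' mod int n}" by (rule finite_subset[of _ "{..min l m}"]) auto
  have e: "\<And>k. (p' + int l - int k) mod int n = (p + (int l - int k)) mod int n"
  proof -
    fix k
    have "(p' + int l - int k) mod int n = (p' + (int l - int k)) mod int n" by (simp add: algebra_simps)
    also have "\<dots> = (p' mod int n + (int l - int k)) mod int n" by (simp add: mod_add_left_eq)
    also have "\<dots> = (p + (int l - int k)) mod int n" using that by (simp add: mod_add_left_eq)
    finally show "(p' + int l - int k) mod int n = (p + (int l - int k)) mod int n" .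
  qed
  have "homdim n (p', l) (q', m) = 0 \<longleftrightarrow>
      (\<forall>k. 1 \<le> k \<and> k \<le> min l m \<longrightarrow> (p' + int l - int k) mod int n \<noteq> q' mod int n)"
    unfolding homdim_def using fin by auto
  also have "\<dots> \<longleftrightarrow> (\<forall>k. 1 \<le> k \<and> k \<le> min l m \<longrightarrow> p + (int l - int k) \<noteq> q)"
    using modeq[of "int n"] n b unfolding e q by auto
  finally show ?thesis .
qed

lemma compat_eq:
  "compatible n y w \<longleftrightarrow> homdim n w (tau n y) = 0 \<and> homdim n y (tau n w) = 0"
  by (auto simp: compatible_def ext1_C_def ext1_T_def)

lemma compY:
  fixes a :: int and s i c b n :: nat
  assumes "0 < n" "s + i \<le> b" "b < n" "1 \<le> i" "c < n"
  shows "compatible n (a, c) ((a + int s) mod int n, i) \<longleftrightarrow> (s = 0 \<or> c < s \<or> s + i \<le> c)"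
proof -
  have h1: "homdim n ((a + int s) mod int n, i) (tau n (a, c)) = 0"
    unfolding tau_def fst_conv snd_conv
    by (subst hd_iff[where p="a + int s" and q="a - 1"]) (use assms in auto)
  have h2: "homdim n (a, c) (tau n ((a + int s) mod int n, i)) = 0 \<longleftrightarrow>
     (\<forall>k. 1 \<le> k \<and> k \<le> min c i \<longrightarrow> a + (int c - int k) \<noteq> a + int s - 1)"
    unfolding tau_def fst_conv snd_conv
    by (rule hd_iff) (use assms in \<open>auto simp: mod_simps\<close>)
  have h3: "(\<forall>k. 1 \<le> k \<and> k \<le> min c i \<longrightarrow> a + (int c - int k) \<noteq> a + int s - 1)
     \<longleftrightarrow> (s = 0 \<or> c < s \<or> s + i \<le> c)"
    by presburger
  show ?thesis unfolding compat_eq using h1 h2 h3 by simp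
qed

lemma compZ:
  fixes a :: int and s i c d b n :: nat
  assumes "0 < n" "s + i \<le> b" "b < n" "1 \<le> i" "c + 1 + d = b"
  shows "compatible n ((a + int c + 1) mod int n, d) ((a + int s) mod int n, i) \<longleftrightarrow>
     \<not> (s \<le> c \<and> c + 1 \<le> s + i \<and> s + i \<le> c + d)"
proof -
  have h1: "homdim n ((a + int s) mod int n, i) (tau n ((a + int c + 1) mod int n, d)) = 0 \<longleftrightarrow>
     (\<forall>k. 1 \<le> k \<and> k \<le> min i d \<longrightarrow> a + int s + (int i - int k) \<noteq> a + int c)"
    unfolding tau_def fst_conv snd_conv
    by (rule hd_iff) (use assms in \<open>auto simp: mod_simps\<close>)
  have h2: "homdim n ((a + int c + 1) mod int n, d) (tau n ((a + int s) mod int n, i)) = 0"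
    unfolding tau_def fst_conv snd_conv
    by (subst hd_iff[where p="a + int c + 1" and q="a + int s - 1"]) (use assms in \<open>auto simp: mod_simps\<close>)
  have h3: "(\<forall>k. 1 \<le> k \<and> k \<le> min i d \<longrightarrow> a + int s + (int i - int k) \<noteq> a + int c)
     \<longleftrightarrow> \<not> (s \<le> c \<and> c + 1 \<le> s + i \<and> s + i \<le> c + d)"
    by presburger
  show ?thesis unfolding compat_eq using h1 h2 h3 by simp
qed

lemma wing_mem:
  fixes a z :: int and s i t l n :: nat
  assumes "0 < n" "z mod int n = (a + int t) mod int n" "s < n" "t + l < n"
  shows "((a + int s) mod int n, i) \<in> wing n (z, l) \<longleftrightarrow> t \<le> s \<and> 1 \<le> i \<and> (s - t) + i \<le> l"
proof -
  have e: "\<And>s'. s' \<le> l \<Longrightarrow> ((z + int s') mod int n = (a + int s) mod int n) \<longleftrightarrow> t + s' = s"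
  proof -
    fix s' assume "s' \<le> l"
    have "(z + int s') mod int n = (a + int t + int s') mod int n"
      using assms(2) by (metis mod_add_left_eq)
    also have "\<dots> = (a + int s) mod int n \<longleftrightarrow> a + int t + int s' = a + int s"
      by (rule modeq) (use assms \<open>s' \<le> l\<close> in auto)
    finally have "((z + int s') mod int n = (a + int s) mod int n) \<longleftrightarrow> int (t + s') = int s" by simp
    then show "((z + int s') mod int n = (a + int s) mod int n) \<longleftrightarrow> t + s' = s" by (simp only: of_nat_eq_iff)
  qed
  show ?thesis
  proof
    assume "((a + int s) mod int n, i) \<in> wing n (z, l)"
    then obtain s' i' where "((a + int s) mod int n, i) = ((z + int s') mod int n, i')" "1 \<le> i'" "s' + i' \<le> l"
      unfolding wing_def by auto
    then show "t \<le> s \<and> 1 \<le> i \<and> (s - t) + i \<le> l" using e[of s'] by auto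
  next
    assume h: "t \<le> s \<and> 1 \<le> i \<and> (s - t) + i \<le> l"
    then have "((a + int s) mod int n, i) = ((z + int (s - t)) mod int n, i)" using e[of "s - t"] by auto
    then show "((a + int s) mod int n, i) \<in> wing n (z, l)" unfolding wing_def fst_conv snd_conv mem_Collect_eq using h by blast
  qed
qed

lemma ray_mem:
  fixes a :: int and s i c n :: nat
  assumes "0 \<le> a" "a < int n" "s < n"
  shows "((a + int s) mod int n, i) \<in> ray n (a, c) \<longleftrightarrow> s = 0 \<and> c \<le> i"
proof -
  have "((a + int s) mod int n = a) \<longleftrightarrow> ((a + int s) mod int n = a mod int n)" using assms by simp
  also have "\<dots> \<longleftrightarrow> s = 0" by (subst modeq) (use assms in auto)
  finally show ?thesis unfolding ray_def by (auto simp: le_iff_add)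
qed

lemma coray_mem:
  fixes a :: int and s i c d n :: nat
  assumes "0 < n" "s + i < n" "c + 1 + d < n"
  shows "((a + int s) mod int n, i) \<in> coray n ((a + int c + 1) mod int n, d) \<longleftrightarrow> d \<le> i \<and> s + i = c + 1 + d"
proof -
  have e: "\<And>j. j \<le> i \<Longrightarrow> (((a + int c + 1) mod int n - int j) mod int n = (a + int s) mod int n) \<longleftrightarrow> c + 1 = s + j"
  proof -
    fix j assume "j \<le> i"
    have "((a + int c + 1) mod int n - int j) mod int n = (a + int c + 1 - int j) mod int n"
      by (simp add: mod_diff_left_eq)
    also have "\<dots> = (a + int s) mod int n \<longleftrightarrow> a + int c + 1 - int j = a + int s"
      by (rule modeq) (use assms \<open>j \<le> i\<close> in auto)
    finally show "(((a + int c + 1) mod int n - int j) mod int n = (a + int s) mod int n) \<longleftrightarrow> c + 1 = s + j" by auto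
  qed
  show ?thesis
  proof
    assume "((a + int s) mod int n, i) \<in> coray n ((a + int c + 1) mod int n, d)"
    then obtain j where "((a + int s) mod int n, i) = (((a + int c + 1) mod int n - int j) mod int n, d + j)"
      unfolding coray_def by auto
    then show "d \<le> i \<and> s + i = c + 1 + d" using e[of j] by auto
  next
    assume h: "d \<le> i \<and> s + i = c + 1 + d"
    then have "((a + int s) mod int n, i) = (((a + int c + 1) mod int n - int (i - d)) mod int n, d + (i - d))"
      using e[of "i - d"] by auto
    then show "((a + int s) mod int n, i) \<in> coray n ((a + int c + 1) mod int n, d)"
      unfolding coray_def fst_conv snd_conv mem_Collect_eq by blast
  qed
qed

theorem lemma2p3:
  fixes n :: nat and X W :: "int \<times> nat" and Y Z :: "(int \<times> nat) option"
  assumes "n \<ge> 2"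
    and "subwing_triple n X Y Z"
    and "W \<in> wing n X"
  shows "(\<forall>y. Y = Some y \<longrightarrow>
            (compatible n y W \<longleftrightarrow> W \<in> wing_opt n Y \<union> wing_opt n Z \<or> W \<in> ray n y))
       \<and> (\<forall>z. Z = Some z \<longrightarrow>
            (compatible n z W \<longleftrightarrow> W \<in> wing_opt n Y \<union> wing_opt n Z \<or> W \<in> coray n z))"
proof -
  have n0: "0 < n" using assms(1) by simp
  obtain a b where X: "X = (a, b)" "0 \<le> a" "a < int n" "2 \<le> b" "b < n"
    using assms(2) unfolding subwing_triple_def nondeg_subwing_triple_def deg_subwing_triple_def
    by auto
  obtain s i where W: "W = ((a + int s) mod int n, i)" "1 \<le> i" "s + i \<le> b"
    using assms(3) unfolding wing_def X(1) by auto
  have sn: "s < n" "s + i < n" using W X by auto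
  have wY: "\<And>c. c < n \<Longrightarrow> W \<in> wing n (a, c) \<longleftrightarrow> s + i \<le> c"
    unfolding W(1) by (subst wing_mem[where t=0]) (use n0 sn W in auto)
  have wZ: "\<And>c d. c + 1 + d = b \<Longrightarrow> W \<in> wing n ((a + int c + 1) mod int n, d) \<longleftrightarrow> c < s"
    unfolding W(1) by (subst wing_mem[where t="Suc c"]) (use n0 sn W X in \<open>auto simp: mod_simps ac_simps\<close>)
  have rY: "\<And>c. W \<in> ray n (a, c) \<longleftrightarrow> s = 0 \<and> c \<le> i"
    unfolding W(1) by (rule ray_mem) (use X sn in auto)
  have cZ: "\<And>c d. c + 1 + d = b \<Longrightarrow> W \<in> coray n ((a + int c + 1) mod int n, d) \<longleftrightarrow> d \<le> i \<and> s + i = c + 1 + d"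
    unfolding W(1) by (rule coray_mem) (use n0 sn X in auto)
  have kY: "\<And>c. c < n \<Longrightarrow> compatible n (a, c) W \<longleftrightarrow> (s = 0 \<or> c < s \<or> s + i \<le> c)"
    unfolding W(1) by (rule compY[where b=b]) (use n0 W X in auto)
  have kZ: "\<And>c d. c + 1 + d = b \<Longrightarrow> compatible n ((a + int c + 1) mod int n, d) W \<longleftrightarrow>
     \<not> (s \<le> c \<and> c + 1 \<le> s + i \<and> s + i \<le> c + d)"
    unfolding W(1) by (rule compZ[where b=b]) (use n0 W X in auto)
  consider (nd) c where "1 \<le> c" "c + 2 \<le> b" "Y = Some (a, c)" "Z = Some ((a + int c + 1) mod int n, b - c - 1)"
    | (dY) "Y = Some (a, b - 1)" "Z = None"
    | (dZ) "Y = None" "Z = Some ((a + int 0 + 1) mod int n, b - 0 - 1)"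
    using assms(2) X(1) unfolding subwing_triple_def nondeg_subwing_triple_def deg_subwing_triple_def
    by fastforce
  then show ?thesis
  proof cases
    case nd
    have e: "c + 1 + (b - c - 1) = b" using nd by auto
    show ?thesis using nd wY[of c] wZ[OF e] rY[of c] cZ[OF e] kY[of c] kZ[OF e] X W
      by (auto simp: wing_opt_def)
  next
    case dY
    show ?thesis using dY wY[of "b - 1"] rY[of "b - 1"] kY[of "b - 1"] X W
      by (auto simp: wing_opt_def)
  next
    case dZ
    have e: "0 + 1 + (b - 0 - 1) = b" using X by auto
    show ?thesis using dZ wZ[OF e] cZ[OF e] kZ[OF e] X W
      by (auto simp: wing_opt_def)
  qed
qed

end
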